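(* Let $\kappa:[-1,1]\to\mathbb{R}$ be given by $\kappa(t)=\sum_{q\ge 0}\frac{J_q^2}{q!}t^q$, where $J_q\in\mathbb{R}$, $J_q\neq 0$ for infinitely many $q$, $\sum_{q\ge1}\frac{|J_q|}{(q-1)!}<\infty$ (so that $\kappa\in C^1([-1,1])$), and $\kappa(1)=1$. For $L\ge1$ let $\kappa_L=\kappa\circ\cdots\circ\kappa$ ($L$ times). Assume $\kappa'(1)<1$. Then for every $t\in[-1,1]$ the limit \[ \mathfrak{L}(t)=\lim_{L\to\infty}(\kappa'(1))^{-L}\bigl(1-\kappa_L(t)\bigr) \] exists in $[0,\infty)$. Moreover, if in addition there exist $c\in\mathbb{R}\setminus\{0\}$ and $\rho>1$ such that \[ 1-\kappa(t)=\kappa'(1)(1-t)-c(1-t)^{\rho}+o\bigl((1-t)^{\rho}\bigr)\quad\text{as } t\to1^-, \] then $\mathfrak{L}(t)=0$ if and only if $t\in\mathcal{I}(\kappa):=\{s\in[-1,1]:\kappa(s)=1\}$. *)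

theory Defs
  imports "HOL-Analysis.Analysis" "HOL-Library.Landau_Symbols"
begin

definition kappa :: "(nat \<Rightarrow> real) \<Rightarrow> real \<Rightarrow> real" where
  "kappa J t = (\<Sum>q. (J q)\<^sup>2 / fact q * t ^ q)"

definition kappaL :: "(nat \<Rightarrow> real) \<Rightarrow> nat \<Rightarrow> real \<Rightarrow> real" where
  "kappaL J L = (kappa J ^^ L)"

text \<open>The limit frak L(t) = lim_L (kappa'(1))^(-L) (1 - kappa_L(t)), where D = kappa'(1).\<close>
definition frakL :: "(nat \<Rightarrow> real) \<Rightarrow> real \<Rightarrow> real \<Rightarrow> real" where
  "frakL J D t = lim (\<lambda>L. (1 - kappaL J L t) / D ^ L)"

end

theory Submission
  imports Defs
begin


lemma exp_bound: fixes z :: real assumes "0 \<le> z" "z \<le> 1/2" shows "exp (-2*z) \<le> 1 - z"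
proof -
  have "1 + 2*z \<le> exp (2*z)" using exp_ge_add_one_self[of "2*z"] by simp
  hence "exp (-2*z) \<le> 1/(1+2*z)" using assms
    by (simp add: exp_minus field_simps)
  also have "\<dots> \<le> 1 - z" using assms by (simp add: field_simps) (smt (verit) mult_left_le mult_nonneg_nonneg)
  finally show ?thesis .
qed

lemma core_lower:
  fixes f :: "real \<Rightarrow> real" and D K a b v :: real
  assumes flt: "\<And>s. s \<in> {-1<..<1} \<Longrightarrow> f s < 1"
    and flin: "\<And>s. s \<in> {-1..1} \<Longrightarrow> 1 - f s \<le> D * (1 - s)"
    and Dpos: "0 < D" and Dlt: "D < 1" and Kpos: "0 \<le> K" and apos: "0 < a"
    and b0: "0 \<le> b" and b1: "b < 1"
    and lowb: "\<And>y. b < y \<Longrightarrow> y < 1 \<Longrightarrow> D*(1-y)*(1 - K*(1-y) powr a) \<le> 1 - f y"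
    and half: "\<And>y. b < y \<Longrightarrow> y < 1 \<Longrightarrow> K*(1-y) powr a \<le> 1/2"
    and v: "b < v" "v < 1"
  shows "\<exists>\<beta>>0. \<forall>L. \<beta> \<le> (1 - (f^^L) v)/D^L"
proof -
  define r where "r = D powr a"
  define e0 where "e0 = (1-v) powr a"
  have r1: "r < 1" unfolding r_def using Dpos Dlt apos powr01_less_one by blast
  have r0: "0 < r" unfolding r_def using Dpos by simp
  have e00: "0 \<le> e0" unfolding e0_def by simp
  have inv: "b < (f^^L) v \<and> (f^^L) v < 1 \<and> (1 - (f^^L) v) powr a \<le> r^L * e0
     \<and> (1-v) * exp(-2*K*e0*((1-r^L)/(1-r))) \<le> (1 - (f^^L) v)/D^L" for L
  proof (induction L)
    case 0
    then show ?case using v by (simp add: e0_def)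
  next
    case (Suc L)
    define y where "y = (f^^L) v"
    define w where "w = 1 - y"
    have fs: "(f^^Suc L) v = f y" by (simp add: y_def)
    have y: "b < y" "y < 1" "(1-y) powr a \<le> r^L * e0"
      "(1-v) * exp(-2*K*e0*((1-r^L)/(1-r))) \<le> (1 - y)/D^L"
      using Suc.IH by (simp_all add: y_def)
    have w0: "0 < w" using y by (simp add: w_def)
    have yin: "y \<in> {-1<..<1}" "y \<in> {-1..1}" using y b0 by auto
    have fy1: "f y < 1" using flt yin by blast
    have fylin: "1 - f y \<le> D * w" using flin yin w_def by blast
    have "D * w < w" using Dlt w0 by simp
    hence fyb: "b < f y" using fylin y unfolding w_def by linarith
    have "(1 - f y) powr a \<le> (D*w) powr a" using fy1 fylin apos by (intro powr_mono2) auto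
    also have "\<dots> = r * w powr a" unfolding r_def using Dpos w0 by (simp add: powr_mult)
    also have "\<dots> \<le> r * (r^L * e0)" using y(3) r0 unfolding w_def by (simp)
    finally have e: "(1 - f y) powr a \<le> r^Suc L * e0" by simp
    have hw: "K * w powr a \<le> 1/2" using half y unfolding w_def by blast
    have hw0: "0 \<le> K * w powr a" using Kpos by simp
    have DL: "0 < D^L" using Dpos by simp
    have "(1-v) * exp(-2*K*e0*((1-r^Suc L)/(1-r)))
        = ((1-v) * exp(-2*K*e0*((1-r^L)/(1-r)))) * exp(-2*(K*(r^L*e0)))"
    proof -
      have "(1-r^Suc L)/(1-r) = (1-r^L)/(1-r) + r^L" using r1 by (simp add: field_simps)
      thus ?thesis by (simp add: algebra_simps flip: exp_add)
    qed
    also have "\<dots> \<le> ((1 - y)/D^L) * exp(-2*(K*w powr a))"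
    proof (rule mult_mono)
      show "exp (-2*(K*(r^L*e0))) \<le> exp(-2*(K*w powr a))"
        using y(3) Kpos unfolding w_def by (simp add: mult_left_mono)
    qed (use y(4) w0 DL in \<open>auto simp: w_def\<close>)
    also have "\<dots> \<le> (w/D^L) * (1 - K*w powr a)"
      using exp_bound[OF hw0 hw] w0 DL
      by (simp add: w_def divide_right_mono mult_left_mono times_divide_eq_left[symmetric] del: times_divide_eq_left)
    also have "\<dots> = D*w*(1 - K*w powr a) / D^Suc L" using Dpos by (simp add: field_simps)
    also have "\<dots> \<le> (1 - f y) / D^Suc L"
      using lowb[OF y(1) y(2)] Dpos unfolding w_def by (intro divide_right_mono) auto
    finally show ?case using fs fy1 fyb e by simp
  qed
  define \<beta> where "\<beta> = (1-v) * exp(-2*K*e0*(1/(1-r)))"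
  have "\<beta> > 0" unfolding \<beta>_def using v by simp
  moreover have "\<beta> \<le> (1 - (f^^L) v)/D^L" for L
  proof -
    have "(1-r^L)/(1-r) \<le> 1/(1-r)" using r0 r1 by (simp add: divide_right_mono)
    hence "K*e0*((1-r^L)/(1-r)) \<le> K*e0*(1/(1-r))" using Kpos e00 by (intro mult_left_mono) auto
    hence "\<beta> \<le> (1-v) * exp(-2*K*e0*((1-r^L)/(1-r)))" unfolding \<beta>_def using v by simp
    thus ?thesis using inv[of L] by linarith
  qed
  ultimately show ?thesis by blast
qed

lemma abstract_part1:
  fixes f :: "real \<Rightarrow> real" and D :: real
  assumes frange: "\<And>s. s \<in> {-1..1} \<Longrightarrow> -1 < f s \<and> f s \<le> 1"
    and flin: "\<And>s. s \<in> {-1..1} \<Longrightarrow> 1 - f s \<le> D * (1 - s)"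
    and Dpos: "0 < D" and t: "t \<in> {-1..1}"
  shows "\<exists>l\<ge>0. (\<lambda>L. (1 - (f^^L) t) / D ^ L) \<longlonglongrightarrow> l"
proof -
  have rng: "(f^^L) t \<in> {-1..1}" for L
    by (induction L) (use t frange in \<open>auto simp: less_imp_le\<close>)
  define X where "X = (\<lambda>L. (1 - (f^^L) t) / D ^ L)"
  have X0: "0 \<le> X L" for L using rng[of L] Dpos by (auto simp: X_def)
  have Xdec: "X (Suc L) \<le> X L" for L
  proof -
    have "1 - f ((f^^L) t) \<le> D * (1 - (f^^L) t)" using flin rng by blast
    hence "(1 - f ((f^^L) t)) / D^Suc L \<le> D * (1 - (f^^L) t) / D^Suc L"
      using Dpos by (intro divide_right_mono) auto
    thus ?thesis using Dpos by (simp add: X_def)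
  qed
  obtain l where l: "X \<longlonglongrightarrow> l" "\<forall>i. l \<le> X i"
    using decseq_convergent[OF decseq_SucI[of X, OF Xdec], of 0] X0 by blast
  have "0 \<le> l" using LIMSEQ_le_const[OF l(1)] X0 by blast
  thus ?thesis using l X_def by blast
qed

lemma abstract_part2:
  fixes f :: "real \<Rightarrow> real" and D c \<rho> :: real
  assumes f1: "f 1 = 1"
    and frange: "\<And>s. s \<in> {-1..1} \<Longrightarrow> -1 < f s \<and> f s \<le> 1"
    and flin: "\<And>s. s \<in> {-1..1} \<Longrightarrow> 1 - f s \<le> D * (1 - s)"
    and flt: "\<And>s. s \<in> {-1<..<1} \<Longrightarrow> f s < 1"
    and Dpos: "0 < D" and Dlt: "D < 1"
    and rho: "\<rho> > 1"
    and osm: "(\<lambda>t. (1 - f t) - (D * (1 - t) - c * (1 - t) powr \<rho>)) \<in> o[at_left 1](\<lambda>t. (1 - t) powr \<rho>)"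
    and t: "t \<in> {-1..1}"
  shows "lim (\<lambda>L. (1 - (f^^L) t) / D ^ L) = 0 \<longleftrightarrow> f t = 1"
proof
  assume ft: "f t = 1"
  have F1: "(f^^L) 1 = 1" for L by (induction L) (auto simp: f1)
  have "\<forall>\<^sub>F L in sequentially. (1 - (f^^L) t) / D ^ L = 0"
  proof (rule eventually_sequentiallyI[of 1])
    fix L :: nat assume "1 \<le> L"
    then obtain M where "L = Suc M" by (cases L) auto
    thus "(1 - (f^^L) t) / D ^ L = 0" using ft F1 by (simp add: funpow_Suc_right del: funpow.simps)
  qed
  thus "lim (\<lambda>L. (1 - (f^^L) t) / D ^ L) = 0" by (intro limI tendsto_eventually)
next
  assume lim0: "lim (\<lambda>L. (1 - (f^^L) t) / D ^ L) = 0"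
  show "f t = 1"
  proof (rule ccontr)
    assume ft: "f t \<noteq> 1"
    obtain l where l: "(\<lambda>L. (1 - (f^^L) t) / D ^ L) \<longlonglongrightarrow> l"
      using abstract_part1[OF frange flin Dpos t] by blast
    have l0: "l = 0" using limI[OF l] lim0 by simp
    define K where "K = (\<bar>c\<bar> + 1) / D"
    have Kpos: "0 \<le> K" using Dpos by (simp add: K_def)
    define a where "a = \<rho> - 1"
    have apos: "0 < a" using rho by (simp add: a_def)
    have ev1: "\<forall>\<^sub>F y in at_left 1. norm ((1 - f y) - (D * (1 - y) - c * (1 - y) powr \<rho>)) \<le> 1 * norm ((1 - y) powr \<rho>)"
      using landau_o.smallD[OF osm, of 1] by simp
    have "((\<lambda>y. K * (1-y) powr a) \<longlongrightarrow> K * 0) (at_left (1::real))"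
    proof (intro tendsto_mult tendsto_const tendsto_zero_powrI)
      show "((\<lambda>y. 1 - y) \<longlongrightarrow> 0) (at_left (1::real))"
        by (rule tendsto_eq_intros refl | simp)+
    qed (use apos in \<open>auto simp: eventually_at_left_real intro!: eventually_mono[OF eventually_at_left_real[of 0]]\<close>)
    hence ev2: "\<forall>\<^sub>F y in at_left 1. K * (1-y) powr a < 1/2"
      by (intro order_tendstoD(2)) auto
    have ev3: "\<forall>\<^sub>F y in at_left (1::real). y \<in> {0<..<1}" by (rule eventually_at_left_real) simp
    have "\<forall>\<^sub>F y in at_left 1. D*(1-y)*(1 - K*(1-y) powr a) \<le> 1 - f y \<and> K*(1-y) powr a \<le> 1/2"
      using ev1 ev2 ev3
    proof eventually_elim
      case (elim y)
      have w: "0 < 1 - y" using elim by auto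
      have pw: "(1-y) powr \<rho> = (1-y) * (1-y) powr a"
        using powr_add[of "1-y" 1 a] w by (simp add: a_def)
      have "D*(1-y)*(1 - K*(1-y) powr a) = D*(1-y) - (\<bar>c\<bar>+1) * (1-y) powr \<rho>"
        unfolding pw K_def using Dpos by (simp add: field_simps)
      also have "\<dots> \<le> 1 - f y"
      proof -
        have "\<bar>c * (1-y) powr \<rho>\<bar> \<le> \<bar>c\<bar> * (1-y) powr \<rho>" by (simp add: abs_mult)
        thus ?thesis using elim(1) by (simp add: algebra_simps)
      qed
      finally show ?case using elim(2) by simp
    qed
    hence "\<exists>b<1. \<forall>y>b. y < 1 \<longrightarrow> D*(1-y)*(1 - K*(1-y) powr a) \<le> 1 - f y \<and> K*(1-y) powr a \<le> 1/2"
      by (simp add: eventually_at_left[OF zero_less_one[where 'a=real]])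
    then obtain b' where b': "b' < 1" "\<And>y. b' < y \<Longrightarrow> y < 1 \<Longrightarrow> D*(1-y)*(1 - K*(1-y) powr a) \<le> 1 - f y \<and> K*(1-y) powr a \<le> 1/2"
      by blast
    define b where "b = max b' 0"
    have b: "0 \<le> b" "b < 1" using b' by (auto simp: b_def)
    have rng: "(f^^L) t \<in> {-1..1}" for L
      by (induction L) (use t frange in \<open>auto simp: less_imp_le\<close>)
    have flin': "1 - (f^^L) t \<le> D^L * (1 - t)" for L
    proof (induction L)
      case (Suc L)
      have "1 - f ((f^^L) t) \<le> D * (1 - (f^^L) t)" using flin rng by blast
      also have "\<dots> \<le> D * (D^L * (1-t))" using Suc Dpos by simp
      finally show ?case by simp
    qed simp
    have lt1: "(f^^Suc L) t \<in> {-1<..<1}" for L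
    proof (induction L)
      case 0
      then show ?case using frange[OF t] ft by auto
    next
      case (Suc L)
      then show ?case using flt[OF Suc] frange[of "(f^^Suc L) t"] by auto
    qed
    have "((\<lambda>L. D^L * (1 - t)) \<longlonglongrightarrow> 0 * (1 - t))"
      using Dpos Dlt by (intro tendsto_mult tendsto_const LIMSEQ_power_zero) auto
    hence "\<forall>\<^sub>F L in sequentially. D^L * (1 - t) < 1 - b" using b by (intro order_tendstoD(2)) auto
    then obtain M0 where M0: "D^M0 * (1-t) < 1 - b" by (auto simp: eventually_sequentially)
    define M where "M = Suc M0"
    have "D^M * (1-t) \<le> D^M0 * (1-t)" using Dpos Dlt t
      by (auto simp: M_def intro!: mult_right_mono mult_left_le_one_le)
    hence vb: "b < (f^^M) t" using flin'[of M] M0 by linarith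
    have v1: "(f^^M) t < 1" using lt1[of M0] by (simp add: M_def del: funpow.simps)
    obtain \<beta> where \<beta>: "\<beta> > 0" "\<And>L. \<beta> \<le> (1 - (f^^L) ((f^^M) t))/D^L"
      using core_lower[OF flt flin Dpos Dlt Kpos apos b, of "(f^^M) t"] b' vb v1
      by (auto simp: b_def)
    have "\<beta> / D^M \<le> l"
    proof (rule LIMSEQ_le_const[OF l], intro exI allI impI)
      fix n assume "M \<le> n"
      then obtain L where n: "n = L + M" by (metis add.commute le_add_diff_inverse)
      have "(f^^n) t = (f^^L) ((f^^M) t)" by (simp add: n funpow_add)
      hence "(1 - (f^^n) t) / D^n = ((1 - (f^^L) ((f^^M) t))/D^L) / D^M"
        by (simp add: n power_add)
      moreover have "\<beta> / D^M \<le> ((1 - (f^^L) ((f^^M) t))/D^L) / D^M" using \<beta>(2)[of L] Dpos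
        by (intro divide_right_mono) auto
      ultimately show "\<beta> / D^M \<le> (1 - (f^^n) t) / D^n" by simp
    qed
    moreover have "\<beta> / D^M > 0" using \<beta> Dpos by simp
    ultimately show False using l0 by simp
  qed
qed



lemma pow_lin: fixes s :: real assumes "s \<in> {-1..1}" shows "1 - s^q \<le> real q * (1 - s)"
proof (cases "s \<ge> 0")
  case True
  have "1 + real q * (s - 1) \<le> (1 + (s - 1))^q" using True by (intro Bernoulli_inequality) simp
  thus ?thesis by (simp add: algebra_simps)
next
  case False
  have "\<bar>s^q\<bar> \<le> 1" using assms by (auto simp: power_abs intro!: power_le_one)
  hence s1: "-1 \<le> s^q" by linarith
  show ?thesis
  proof (cases "q \<le> 1")
    case True
    then have "q = 0 \<or> q = 1" by auto
    then show ?thesis by auto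
  next
    case False': False
    have "2 \<le> real q" using False' by simp
    moreover have "1 \<le> 1 - s" using False by simp
    ultimately have "2 \<le> real q * (1 - s)" by (metis mult_mono' mult.right_neutral order_trans le_numeral_extra(1) zero_le_numeral)
    thus ?thesis using s1 by linarith
  qed
qed

lemma suminf_nonsummable: "\<not> summable f \<Longrightarrow> suminf f = (THE s. False)"
proof -
  assume "\<not> summable f"
  hence "(\<lambda>s. f sums s) = (\<lambda>s. False)" by (auto simp: summable_def)
  thus ?thesis by (simp add: suminf_def)
qed

lemma caseB:
  fixes J :: "nat \<Rightarrow> real" and D :: real
  defines "a \<equiv> (\<lambda>q. (J q)\<^sup>2 / fact q)"
  assumes ns: "\<not> summable a"
    and norm1: "kappa J 1 = 1"
    and deriv1: "(kappa J has_real_derivative D) (at 1 within {-1..1})"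
  shows "D = 0" "\<forall>\<^sub>F y in at_left 1. kappa J y = 1"
proof -
  have a0: "0 \<le> a q" for q by (simp add: a_def)
  have k: "kappa J y = (\<Sum>q. a q * y^q)" for y by (simp add: kappa_def a_def)
  have the1: "(THE s. False) = (1::real)" using norm1 suminf_nonsummable[OF ns] by (simp add: k)
  have atl: "at (1::real) within {-1..1} = at_left 1" by (rule at_within_Icc_at_left) simp
  have cont: "(kappa J \<longlongrightarrow> 1) (at_left 1)"
    using DERIV_continuous[OF deriv1] norm1 by (simp add: continuous_within atl)
  obtain N where N: "2 < sum a {..<N}"
  proof -
    have "\<not> (\<forall>n. sum a {..<n} \<le> 2)" using ns summableI_nonneg_bounded[of a 2] a0 by blast
    thus ?thesis using that by (auto simp: not_le)
  qed
  have "((\<lambda>y. \<Sum>q<N. a q * y^q) \<longlongrightarrow> (\<Sum>q<N. a q * 1^q)) (at_left (1::real))"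
    by (intro tendsto_intros)
  hence "\<forall>\<^sub>F y in at_left 1. 2 < (\<Sum>q<N. a q * y^q)" using N by (intro order_tendstoD(1)) auto
  moreover have "\<forall>\<^sub>F y in at_left 1. kappa J y < 2" using cont by (intro order_tendstoD(2)) auto
  moreover have "\<forall>\<^sub>F y in at_left (1::real). y \<in> {0<..<1}" by (rule eventually_at_left_real) simp
  ultimately show ev: "\<forall>\<^sub>F y in at_left 1. kappa J y = 1"
  proof eventually_elim
    case (elim y)
    show ?case
    proof (cases "summable (\<lambda>q. a q * y^q)")
      case True
      have "(\<Sum>q<N. a q * y^q) \<le> kappa J y" unfolding k
        using True elim(3) a0 by (intro sum_le_suminf) auto
      then show ?thesis using elim by simp
    next
      case False
      then show ?thesis using suminf_nonsummable[OF False] the1 by (simp add: k)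
    qed
  qed
  have "((\<lambda>y. (kappa J y - kappa J 1) / (y - 1)) \<longlongrightarrow> D) (at_left 1)"
    using deriv1 by (simp add: has_field_derivative_iff atl)
  moreover have "((\<lambda>y. (kappa J y - kappa J 1) / (y - 1)) \<longlongrightarrow> 0) (at_left 1)"
    by (rule tendsto_eventually) (use ev norm1 in \<open>auto elim: eventually_mono\<close>)
  ultimately show "D = 0" using tendsto_unique trivial_limit_at_left_real by blast
qed

lemma caseA:
  fixes J :: "nat \<Rightarrow> real" and D :: real
  defines "a \<equiv> (\<lambda>q. (J q)\<^sup>2 / fact q)"
  assumes inf_nz: "infinite {q. J q \<noteq> 0}"
    and sa: "summable a"
    and norm1: "kappa J 1 = 1"
    and deriv1: "(kappa J has_real_derivative D) (at 1 within {-1..1})"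
    and Dlt: "D < 1"
  shows "0 < D"
    and "\<And>s. s \<in> {-1..1} \<Longrightarrow> -1 < kappa J s \<and> kappa J s \<le> 1"
    and "\<And>s. s \<in> {-1..1} \<Longrightarrow> 1 - kappa J s \<le> D * (1 - s)"
    and "\<And>s. s \<in> {-1<..<1} \<Longrightarrow> kappa J s < 1"
proof -
  have a0: "0 \<le> a q" for q by (simp add: a_def)
  have k: "kappa J y = (\<Sum>q. a q * y^q)" for y by (simp add: kappa_def a_def)
  have sum1: "suminf a = 1" using norm1 by (simp add: k)
  have pl1: "y^q \<le> 1" "-1 \<le> y^q" if "y \<in> {-1..1}" for y :: real and q
  proof -
    have "\<bar>y^q\<bar> \<le> 1" using that by (auto simp: power_abs intro!: power_le_one)
    thus "y^q \<le> 1" "-1 \<le> y^q" by linarith+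
  qed
  have st: "summable (\<lambda>q. a q * y^q)" if "y \<in> {-1..1}" for y :: real
  proof (rule summable_comparison_test[OF _ sa], intro exI allI impI)
    fix n
    have "\<bar>y^n\<bar> \<le> 1" using that by (auto simp: power_abs intro!: power_le_one)
    thus "norm (a n * y^n) \<le> a n" using a0[of n] by (simp add: abs_mult mult_left_le)
  qed
  have diff: "1 - kappa J y = (\<Sum>q. a q * (1 - y^q))" if "y \<in> {-1..1}" for y :: real
    using suminf_diff[OF sa st[OF that]] sum1 by (simp add: k algebra_simps)
  have sd: "summable (\<lambda>q. a q * (1 - y^q))" if "y \<in> {-1..1}" for y :: real
    using summable_diff[OF sa st[OF that]] by (simp add: algebra_simps)
  have dnn: "0 \<le> a q * (1 - y^q)" if "y \<in> {-1..1}" for y :: real and q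
    using a0 pl1[OF that] by simp
  obtain q0 where q0: "q0 > 0" "J q0 \<noteq> 0" using inf_nz unfolding infinite_nat_iff_unbounded by auto
  have aq0: "a q0 > 0" using q0 by (simp add: a_def)
  have atl: "at (1::real) within {-1..1} = at_left 1" by (rule at_within_Icc_at_left) simp
  have dlim: "((\<lambda>y. (kappa J y - kappa J 1) / (y - 1)) \<longlongrightarrow> D) (at_left 1)"
    using deriv1 by (simp add: has_field_derivative_iff atl)
  have psum: "(\<Sum>q<N. real q * a q) \<le> D" for N
  proof (rule tendsto_le[OF trivial_limit_at_left_real dlim])
    have "((\<lambda>y. (y^q - 1) / (y - 1)) \<longlongrightarrow> real q) (at (1::real))" for q
      using DERIV_pow[of q 1 UNIV] by (simp add: has_field_derivative_iff)
    hence tq: "((\<lambda>y. (y^q - 1) / (y - 1)) \<longlongrightarrow> real q) (at_left (1::real))" for q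
      by (rule tendsto_within_subset) simp
    have eqs: "(\<Sum>q<N. real q * a q) = (\<Sum>q<N. a q * real q)" by (simp add: mult.commute)
    show "((\<lambda>y. \<Sum>q<N. a q * ((y^q - 1) / (y - 1))) \<longlongrightarrow> (\<Sum>q<N. real q * a q)) (at_left 1)"
      unfolding eqs by (intro tendsto_sum tendsto_mult_left tq)
    have "\<forall>\<^sub>F y in at_left (1::real). y \<in> {0<..<1}" by (rule eventually_at_left_real) simp
    thus "\<forall>\<^sub>F y in at_left 1. (\<Sum>q<N. a q * ((y^q - 1) / (y - 1))) \<le> (kappa J y - kappa J 1) / (y - 1)"
    proof eventually_elim
      case (elim y)
      hence y: "y \<in> {-1..1}" by auto
      have "(\<Sum>q<N. a q * (1 - y^q)) \<le> 1 - kappa J y"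
        unfolding diff[OF y] using sd[OF y] dnn[OF y] by (intro sum_le_suminf) auto
      hence "(\<Sum>q<N. a q * (1 - y^q)) / (1 - y) \<le> (1 - kappa J y) / (1 - y)"
        using elim by (intro divide_right_mono) auto
      moreover have "(\<Sum>q<N. a q * ((y^q - 1) / (y - 1))) = (\<Sum>q<N. a q * (1 - y^q)) / (1 - y)"
        using elim by (simp add: sum_divide_distrib) (intro sum.cong; simp add: field_simps)
      moreover have "(kappa J y - kappa J 1) / (y - 1) = (1 - kappa J y) / (1 - y)"
        using elim norm1 by (simp add: field_simps)
      ultimately show ?case by simp
    qed
  qed
  have qa0: "0 \<le> real q * a q" for q using a0 by simp
  have sqa: "summable (\<lambda>q. real q * a q)" using summableI_nonneg_bounded[OF qa0 psum] .
  have sqaD: "(\<Sum>q. real q * a q) \<le> D" using suminf_le_const[OF sqa psum] .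
  have "real q0 * a q0 \<le> (\<Sum>q. real q * a q)"
    using sum_le_suminf[OF sqa, of "{q0}"] qa0 by simp
  moreover have "0 < real q0 * a q0" using q0 aq0 by simp
  ultimately show Dpos: "0 < D" using sqaD by linarith
  have a00: "0 < a 0"
  proof (rule ccontr)
    assume "\<not> 0 < a 0"
    hence "a 0 = 0" using a0[of 0] by simp
    hence "a q \<le> real q * a q" for q using a0[of q] by (cases q) (auto simp: mult_le_cancel_right1)
    hence "suminf a \<le> (\<Sum>q. real q * a q)" by (intro suminf_le sa sqa)
    thus False using sum1 sqaD Dlt by simp
  qed
  show "1 - kappa J s \<le> D * (1 - s)" if s: "s \<in> {-1..1}" for s
  proof -
    have "1 - kappa J s \<le> (\<Sum>q. real q * a q * (1 - s))"
      unfolding diff[OF s]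
    proof (rule suminf_le[OF _ sd[OF s] summable_mult2[OF sqa]])
      fix q show "a q * (1 - s^q) \<le> real q * a q * (1 - s)"
      proof -
        have "a q * (1 - s^q) \<le> a q * (real q * (1 - s))" using pow_lin[OF s, of q] a0[of q] by (rule mult_left_mono)
        thus ?thesis by (simp add: ac_simps)
      qed
    qed
    also have "\<dots> = (\<Sum>q. real q * a q) * (1 - s)" using suminf_mult2[OF sqa] by simp
    also have "\<dots> \<le> D * (1 - s)" using sqaD s by (intro mult_right_mono) auto
    finally show ?thesis .
  qed
  show "kappa J s < 1" if s: "s \<in> {-1<..<1}" for s
  proof -
    have s': "s \<in> {-1..1}" using s by auto
    have "\<bar>s\<bar> < 1" using s by auto
    hence "s^q0 < 1" using q0(1)
      by (metis abs_ge_self abs_ge_zero dual_order.strict_trans2 order_less_le_trans power_abs power_less_one_iff zero_less_one)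
    hence "0 < a q0 * (1 - s^q0)" using aq0 by simp
    also have "\<dots> \<le> (\<Sum>q. a q * (1 - s^q))"
      using sum_le_suminf[OF sd[OF s'], of "{q0}"] dnn[OF s'] by simp
    finally show ?thesis using diff[OF s'] by simp
  qed
  show "-1 < kappa J s \<and> kappa J s \<le> 1" if s: "s \<in> {-1..1}" for s
  proof
    have "0 \<le> (\<Sum>q. a q * (1 - s^q))" using suminf_nonneg[OF sd[OF s]] dnn[OF s] by simp
    thus "kappa J s \<le> 1" using diff[OF s] by simp
    have sp: "summable (\<lambda>q. a q * (1 + s^q))"
      using summable_add[OF sa st[OF s]] by (simp add: algebra_simps)
    have pn: "0 \<le> a n * (1 + s^n)" for n
      using a0[of n] pl1(2)[OF s, of n] by (intro mult_nonneg_nonneg) auto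
    have "1 + kappa J s = (\<Sum>q. a q * (1 + s^q))"
      using suminf_add[OF sa st[OF s]] sum1 by (simp add: k algebra_simps)
    moreover have "a 0 * (1 + s^0) \<le> (\<Sum>q. a q * (1 + s^q))"
      using sum_le_suminf[OF sp, of "{0}"] pn by simp
    ultimately show "-1 < kappa J s" using a00 by simp
  qed
qed


theorem lemma3p6:
  fixes J :: "nat \<Rightarrow> real" and D :: real
  assumes inf_nz: "infinite {q. J q \<noteq> 0}"
    and summ: "summable (\<lambda>q. \<bar>J (Suc q)\<bar> / fact q)"
    and norm1: "kappa J 1 = 1"
    and deriv1: "(kappa J has_real_derivative D) (at 1 within {-1..1})"
    and Dlt: "D < 1"
  shows "(\<forall>t\<in>{-1..1}. \<exists>l\<ge>0. (\<lambda>L. (1 - kappaL J L t) / D ^ L) \<longlonglongrightarrow> l)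
       \<and> ((\<exists>c \<rho>. c \<noteq> 0 \<and> \<rho> > 1 \<and>
             (\<lambda>t. (1 - kappa J t) - (D * (1 - t) - c * (1 - t) powr \<rho>))
               \<in> o[at_left 1](\<lambda>t. (1 - t) powr \<rho>))
          \<longrightarrow> (\<forall>t\<in>{-1..1}. frakL J D t = 0 \<longleftrightarrow> t \<in> {s\<in>{-1..1}. kappa J s = 1}))"
proof (cases "summable (\<lambda>q. (J q)\<^sup>2 / fact q)")
  case True
  note A = caseA[OF inf_nz True norm1 deriv1 Dlt]
  have kL: "kappaL J L = kappa J ^^ L" for L by (simp add: kappaL_def)
  show ?thesis
  proof (intro conjI impI ballI)
    fix t :: real assume t: "t \<in> {-1..1}"
    show "\<exists>l\<ge>0. (\<lambda>L. (1 - kappaL J L t) / D ^ L) \<longlonglongrightarrow> l"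
      unfolding kL using abstract_part1[OF A(2) A(3) A(1) t] .
  next
    fix t :: real assume t: "t \<in> {-1..1}"
    assume "\<exists>c \<rho>. c \<noteq> 0 \<and> \<rho> > 1 \<and>
             (\<lambda>t. (1 - kappa J t) - (D * (1 - t) - c * (1 - t) powr \<rho>))
               \<in> o[at_left 1](\<lambda>t. (1 - t) powr \<rho>)"
    then obtain c \<rho> where rho: "\<rho> > 1" and osm: "(\<lambda>t. (1 - kappa J t) - (D * (1 - t) - c * (1 - t) powr \<rho>))
               \<in> o[at_left 1](\<lambda>t. (1 - t) powr \<rho>)" by blast
    show "frakL J D t = 0 \<longleftrightarrow> t \<in> {s\<in>{-1..1}. kappa J s = 1}"
      unfolding frakL_def kL using abstract_part2[OF norm1 A(2) A(3) A(4) A(1) Dlt rho osm t] t by simp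
  qed
next
  case False
  note B = caseB[OF False norm1 deriv1]
  show ?thesis
  proof (intro conjI impI ballI)
    fix t :: real assume t: "t \<in> {-1..1}"
    have "((\<lambda>L. (1 - kappaL J L t) / D ^ L) \<longlonglongrightarrow> 0)"
    proof (rule tendsto_eventually, rule eventually_sequentiallyI[of 1])
      fix L :: nat assume "1 \<le> L"
      thus "(1 - kappaL J L t) / D ^ L = 0" using B(1) by simp
    qed
    thus "\<exists>l\<ge>0. (\<lambda>L. (1 - kappaL J L t) / D ^ L) \<longlonglongrightarrow> l" by blast
  next
    assume "\<exists>c \<rho>. c \<noteq> 0 \<and> \<rho> > 1 \<and>
             (\<lambda>t. (1 - kappa J t) - (D * (1 - t) - c * (1 - t) powr \<rho>))
               \<in> o[at_left 1](\<lambda>t. (1 - t) powr \<rho>)"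
    then obtain c \<rho> where c: "c \<noteq> 0" and osm: "(\<lambda>t. (1 - kappa J t) - (D * (1 - t) - c * (1 - t) powr \<rho>))
               \<in> o[at_left 1](\<lambda>t. (1 - t) powr \<rho>)" by blast
    have ev: "\<forall>\<^sub>F t in at_left 1. (1 - kappa J t) - (D * (1 - t) - c * (1 - t) powr \<rho>) = c * (1 - t) powr \<rho>"
      using B(2) by (rule eventually_mono) (simp add: B(1))
    have "(\<lambda>t. c * (1 - t) powr \<rho>) \<in> o[at_left 1](\<lambda>t. (1 - t) powr \<rho>)"
      using osm landau_o.small.in_cong[OF ev] by simp
    hence "(\<lambda>t::real. (1 - t) powr \<rho>) \<in> o[at_left 1](\<lambda>t. (1 - t) powr \<rho>)"
      using c by auto
    hence e0: "\<forall>\<^sub>F t in at_left 1. (1 - t::real) powr \<rho> = 0" by (simp only: landau_o.small_refl_iff)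
    have "\<forall>\<^sub>F t in at_left (1::real). t \<in> {0<..<1}" by (rule eventually_at_left_real) simp
    with e0 have "\<forall>\<^sub>F t in at_left (1::real). False" by eventually_elim simp
    fix t :: real assume "t \<in> {-1..1}"
    show "frakL J D t = 0 \<longleftrightarrow> t \<in> {s\<in>{-1..1}. kappa J s = 1}"
      using \<open>\<forall>\<^sub>F t in at_left (1::real). False\<close> trivial_limit_at_left_real eventually_False by blast
  qed
qed

end
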